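(* Let $Q$ be a set, $(F_i)_{i\in I}$ a family of real-valued maps on $Q$ and $(k_i)_{i\in I}$ a bounded family of nonnegative reals. Assume $\sum_{t\in S}|F_i(t)|\le k_i\mod c_0(I)$ for every finite $S\subseteq Q$, and that $\{i\in I:F_i(t)\ne0\}$ is countable for every $t\in Q$. Then the following are equivalent: (a) $(F_i)_{i\in I}$ is of type $c_0\ell_1$; (b) there exist disjoint sets $A,B$ with $I\times Q=A\cup B$ such that $\lim_{i\in I}F_i(t)\chi_A(i,t)=0$ for all $t\in Q$ and $B_i=\{t\in Q:(i,t)\in B\}$ is countable for all $i\in I$; (c) $(F_i)_{i\in I}$ is of type $c_0\ell_1$ bounded by $(k_i)_{i\in I}$.
   Context: $\lim_{i\in I}a_i=0$ means $\{i:|a_i|\ge\varepsilon\}$ is finite for every $\varepsilon>0$; $c_0(I)$ is the set of such families. "$x_i\le y_i\mod c_0(I)$" means $\{i:x_i\ge y_i+\varepsilon\}$ is finite for every $\varepsilon>0$. $\chi_A$ is the characteristic function of $A$. $(F_i)$ is of type $c_0\ell_1$ if $F_i(t)=a_{i,t}+b_{i,t}$ ($i\in I$, $t\in Q$) with $\lim_ia_{i,t}=0$ for each $t\in Q$ and $\sup_i\sum_{t\in Q}|b_{i,t}|<\infty$; it is of type $c_0\ell_1$ bounded by $(k_i)$ if additionally $\sum_{t\in Q}|b_{i,t}|\le k_i$ for each $i$. *)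

theory Defs
  imports "HOL-Library.Countable_Set" "HOL-Library.Indicator_Function" Complex_Main
begin

definition lim_zero :: "'i set \<Rightarrow> ('i \<Rightarrow> real) \<Rightarrow> bool" where
  "lim_zero I a \<longleftrightarrow> (\<forall>\<epsilon>>0. finite {i\<in>I. \<bar>a i\<bar> \<ge> \<epsilon>})"

definition le_mod_c0 :: "'i set \<Rightarrow> ('i \<Rightarrow> real) \<Rightarrow> ('i \<Rightarrow> real) \<Rightarrow> bool" where
  "le_mod_c0 I x y \<longleftrightarrow> (\<forall>\<epsilon>>0. finite {i\<in>I. x i \<ge> y i + \<epsilon>})"

text \<open>Sum over Q of the nonnegative terms |b t| is at most C (unordered sum = sup of finite partial sums).\<close>
definition abs_sum_le :: "'t set \<Rightarrow> ('t \<Rightarrow> real) \<Rightarrow> real \<Rightarrow> bool" where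
  "abs_sum_le Q b C \<longleftrightarrow> (\<forall>S. finite S \<and> S \<subseteq> Q \<longrightarrow> (\<Sum>t\<in>S. \<bar>b t\<bar>) \<le> C)"

definition type_c0l1 :: "'i set \<Rightarrow> 't set \<Rightarrow> ('i \<Rightarrow> 't \<Rightarrow> real) \<Rightarrow> bool" where
  "type_c0l1 I Q F \<longleftrightarrow> (\<exists>a b. (\<forall>i\<in>I. \<forall>t\<in>Q. F i t = a i t + b i t)
      \<and> (\<forall>t\<in>Q. lim_zero I (\<lambda>i. a i t))
      \<and> (\<exists>C. \<forall>i\<in>I. abs_sum_le Q (b i) C))"

definition type_c0l1_bounded :: "'i set \<Rightarrow> 't set \<Rightarrow> ('i \<Rightarrow> 't \<Rightarrow> real) \<Rightarrow> ('i \<Rightarrow> real) \<Rightarrow> bool" where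
  "type_c0l1_bounded I Q F k \<longleftrightarrow> (\<exists>a b. (\<forall>i\<in>I. \<forall>t\<in>Q. F i t = a i t + b i t)
      \<and> (\<forall>t\<in>Q. lim_zero I (\<lambda>i. a i t))
      \<and> (\<exists>C. \<forall>i\<in>I. abs_sum_le Q (b i) C)
      \<and> (\<forall>i\<in>I. abs_sum_le Q (b i) (k i)))"

end

theory Submission
  imports Defs
begin

lemma abs_sum_countable:
  assumes "abs_sum_le Q f C"
  shows "countable {t\<in>Q. f t \<noteq> 0}"
proof -
  have fin: "finite {t\<in>Q. \<bar>f t\<bar> \<ge> 1 / real (Suc n)}" for n
  proof (rule ccontr)
    let ?E = "{t\<in>Q. \<bar>f t\<bar> \<ge> 1 / real (Suc n)}"
    assume "infinite ?E"
    define N where "N = nat \<lceil>C * real (Suc n)\<rceil> + 1"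
    obtain T where T: "T \<subseteq> ?E" "finite T" "card T = N"
      using infinite_arbitrarily_large[OF \<open>infinite ?E\<close>] by blast
    have "real (card T) * (1 / real (Suc n)) \<le> (\<Sum>t\<in>T. \<bar>f t\<bar>)"
      by (rule sum_bounded_below) (use T in auto)
    also have "\<dots> \<le> C" using assms T unfolding abs_sum_le_def by auto
    finally have "real N \<le> C * real (Suc n)"
      using T(3) by (simp add: field_simps)
    moreover have "real N > C * real (Suc n)" unfolding N_def by linarith
    ultimately show False by simp
  qed
  have "{t\<in>Q. f t \<noteq> 0} \<subseteq> (\<Union>n. {t\<in>Q. \<bar>f t\<bar> \<ge> 1 / real (Suc n)})"
  proof
    fix t assume t: "t \<in> {t\<in>Q. f t \<noteq> 0}"
    then have "\<bar>f t\<bar> > 0" by auto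
    then obtain n where "inverse (real (Suc n)) < \<bar>f t\<bar>" using reals_Archimedean by blast
    then have "1 / real (Suc n) < \<bar>f t\<bar>" by (simp add: inverse_eq_divide)
    with t show "t \<in> (\<Union>n. {t\<in>Q. \<bar>f t\<bar> \<ge> 1 / real (Suc n)})"
      by (intro UN_I[where a=n]) auto
  qed
  moreover have "countable (\<Union>n. {t\<in>Q. \<bar>f t\<bar> \<ge> 1 / real (Suc n)})"
    using fin by (intro countable_UN) (auto intro: countable_finite)
  ultimately show ?thesis using countable_subset by blast
qed

lemma a_to_b:
  assumes "type_c0l1 I Q F"
  shows "\<exists>A B. A \<inter> B = {} \<and> A \<union> B = I \<times> Q
              \<and> (\<forall>t\<in>Q. lim_zero I (\<lambda>i. F i t * indicator A (i, t)))
              \<and> (\<forall>i\<in>I. countable {t\<in>Q. (i, t) \<in> B})"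
proof -
  obtain a b C where ab: "\<forall>i\<in>I. \<forall>t\<in>Q. F i t = a i t + b i t"
    and a0: "\<forall>t\<in>Q. lim_zero I (\<lambda>i. a i t)" and bC: "\<forall>i\<in>I. abs_sum_le Q (b i) C"
    using assms unfolding type_c0l1_def by blast
  define B where "B = {(i,t). i \<in> I \<and> t \<in> Q \<and> b i t \<noteq> 0}"
  define A where "A = I \<times> Q - B"
  have "\<forall>t\<in>Q. lim_zero I (\<lambda>i. F i t * indicator A (i, t))"
  proof (intro ballI)
    fix t assume t: "t \<in> Q"
    show "lim_zero I (\<lambda>i. F i t * indicator A (i, t))"
      unfolding lim_zero_def
    proof (intro allI impI)
      fix e :: real assume e: "e > 0"
      have "{i\<in>I. e \<le> \<bar>F i t * indicator A (i, t)\<bar>} \<subseteq> {i\<in>I. e \<le> \<bar>a i t\<bar>}"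
        using ab t e by (auto simp: A_def B_def indicator_def split: if_splits)
      moreover have "finite {i\<in>I. e \<le> \<bar>a i t\<bar>}" using a0 t e unfolding lim_zero_def by auto
      ultimately show "finite {i\<in>I. e \<le> \<bar>F i t * indicator A (i, t)\<bar>}" using finite_subset by blast
    qed
  qed
  moreover have "\<forall>i\<in>I. countable {t\<in>Q. (i, t) \<in> B}"
    using abs_sum_countable bC by (auto simp: B_def)
  moreover have "A \<inter> B = {}" "A \<union> B = I \<times> Q" by (auto simp: A_def B_def)
  ultimately show ?thesis by blast
qed

lemma c_to_a: "type_c0l1_bounded I Q F k \<Longrightarrow> type_c0l1 I Q F"
  unfolding type_c0l1_bounded_def type_c0l1_def by blast

lemma div_mul_self: "(y::real) > 0 \<Longrightarrow> x / y * y = x" by simp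

lemma countable_Image:
  assumes "countable X" "\<And>x. x \<in> X \<Longrightarrow> countable (R `` {x})"
  shows "countable (R `` X)"
proof -
  have "R `` X = (\<Union>x\<in>X. R `` {x})" by auto
  then show ?thesis using assms by auto
qed

lemma countable_rtrancl_Image:
  assumes "\<And>x. countable (R `` {x})"
  shows "countable (R\<^sup>* `` {t})"
proof -
  have pw: "countable ((R ^^ n) `` {t})" for n
  proof (induction n)
    case 0 then show ?case by simp
  next
    case (Suc n)
    have "(R ^^ Suc n) `` {t} = R `` ((R ^^ n) `` {t})" by (simp add: relcomp_Image)
    then show ?case using Suc countable_Image assms by metis
  qed
  have "R\<^sup>* `` {t} = (\<Union>n. (R ^^ n) `` {t})" using rtrancl_power by blast
  then show ?thesis using pw by auto
qed

lemma b_to_c: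
  fixes I :: "'i set" and Q :: "'t set" and F :: "'i \<Rightarrow> 't \<Rightarrow> real" and k :: "'i \<Rightarrow> real"
  assumes k_nonneg: "\<forall>i\<in>I. 0 \<le> k i"
    and k_bdd: "\<exists>K. \<forall>i\<in>I. k i \<le> K"
    and fin: "\<forall>S. finite S \<and> S \<subseteq> Q \<longrightarrow> le_mod_c0 I (\<lambda>i. \<Sum>t\<in>S. \<bar>F i t\<bar>) k"
    and cnt: "\<forall>t\<in>Q. countable {i\<in>I. F i t \<noteq> 0}"
    and AB: "A \<inter> B = {}" "A \<union> B = I \<times> Q"
    and Alim: "\<forall>t\<in>Q. lim_zero I (\<lambda>i. F i t * indicator A (i, t))"
    and Bcnt: "\<forall>i\<in>I. countable {t\<in>Q. (i, t) \<in> B}"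
  shows "type_c0l1_bounded I Q F k"
proof -
  define Fp where "Fp i t = (if i \<in> I \<and> t \<in> Q \<and> (i,t) \<in> B then F i t else 0)" for i t
  define R where "R = {(t,t'). \<exists>i\<in>I. Fp i t \<noteq> 0 \<and> Fp i t' \<noteq> 0}"
  define cls where "cls t = R\<^sup>* `` {t}" for t
  have Rsym: "(t,t') \<in> R \<Longrightarrow> (t',t) \<in> R" for t t' by (auto simp: R_def)
  have Rimg: "countable (R `` {x})" for x
  proof (cases "x \<in> Q")
    case True
    have "R `` {x} \<subseteq> (\<Union>i\<in>{i\<in>I. F i x \<noteq> 0}. {t\<in>Q. (i, t) \<in> B})"
      by (auto simp: R_def Fp_def split: if_splits)
    moreover have "countable (\<Union>i\<in>{i\<in>I. F i x \<noteq> 0}. {t\<in>Q. (i, t) \<in> B})"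
      using True cnt Bcnt by (intro countable_UN) auto
    ultimately show ?thesis using countable_subset by blast
  next
    case False
    then have "R `` {x} = {}" by (auto simp: R_def Fp_def)
    then show ?thesis by simp
  qed
  have cls_cnt: "countable (cls t)" for t
    unfolding cls_def by (rule countable_rtrancl_Image[OF Rimg])
  have cls_self: "t \<in> cls t" for t by (simp add: cls_def)
  have cls_Q: "cls t \<subseteq> Q" if "t \<in> Q" for t
  proof
    fix u assume "u \<in> cls t"
    then have "(t,u) \<in> R\<^sup>*" by (simp add: cls_def)
    then show "u \<in> Q"
    proof (cases rule: rtranclE)
      case base then show ?thesis using that by simp
    next
      case (step y) then show ?thesis by (auto simp: R_def Fp_def split: if_splits)
    qed
  qed
  have cls_eq: "cls t = cls t'" if "(t,t') \<in> R" for t t'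
  proof -
    have "(t',t) \<in> R" using Rsym that .
    have "cls t' \<subseteq> cls t" using that unfolding cls_def
      by (auto intro: converse_rtrancl_into_rtrancl)
    moreover have "cls t \<subseteq> cls t'" using \<open>(t',t) \<in> R\<close> unfolding cls_def
      by (auto intro: converse_rtrancl_into_rtrancl)
    ultimately show ?thesis by blast
  qed
  define S where "S m t = {u\<in>cls t. to_nat_on (cls t) u < m}" for m t
  have S_fin: "finite (S m t)" for m t
  proof -
    have "to_nat_on (cls t) ` S m t \<subseteq> {..<m}" by (auto simp: S_def)
    then have "finite (to_nat_on (cls t) ` S m t)" using finite_subset by blast
    moreover have "inj_on (to_nat_on (cls t)) (S m t)"
      using inj_on_to_nat_on[OF cls_cnt[of t]] by (rule inj_on_subset) (auto simp: S_def)
    ultimately show ?thesis using finite_imageD by blast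
  qed
  have S_mono: "m \<le> m' \<Longrightarrow> S m t \<subseteq> S m' t" for m m' t by (auto simp: S_def)
  have S_Q: "t \<in> Q \<Longrightarrow> S m t \<subseteq> Q" for m t using cls_Q by (auto simp: S_def)
  define ti where "ti i = (SOME t. Fp i t \<noteq> 0)" for i
  have ti: "Fp i t \<noteq> 0 \<Longrightarrow> Fp i (ti i) \<noteq> 0 \<and> cls (ti i) = cls t \<and> ti i \<in> Q" for i t
  proof -
    assume h: "Fp i t \<noteq> 0"
    then have 1: "Fp i (ti i) \<noteq> 0" unfolding ti_def by (rule someI)
    then have "(ti i, t) \<in> R" using h by (auto simp: R_def Fp_def split: if_splits)
    then show ?thesis using 1 cls_eq by (auto simp: Fp_def split: if_splits)
  qed
  define sm where "sm i m = (\<Sum>u\<in>S m (ti i). \<bar>Fp i u\<bar>)" for i m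
  define P where "P i = {m. sm i m \<le> k i + 1 / real (Suc m)}" for i
  define mi where "mi i = Max (P i)" for i
  define lam where "lam i = k i / (k i + 1 / real (Suc (mi i)))" for i
  define b where "b i t = (if finite (P i) then (if t \<in> S (mi i) (ti i) then lam i * Fp i t else 0)
      else Fp i t)" for i t
  define a where "a i t = F i t - b i t" for i t
  have b0: "Fp i t = 0 \<Longrightarrow> b i t = 0" for i t by (simp add: b_def)
  have P0: "i \<in> I \<Longrightarrow> 0 \<in> P i" for i using k_nonneg by (simp add: P_def sm_def S_def)
  have mi: "i \<in> I \<Longrightarrow> finite (P i) \<Longrightarrow> mi i \<in> P i \<and> (\<forall>m\<in>P i. m \<le> mi i)" for i
    using P0 unfolding mi_def by (metis Max_ge Max_in empty_iff)
  have bsum: "abs_sum_le Q (b i) (k i)" if iI: "i \<in> I" for i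
    unfolding abs_sum_le_def
  proof (intro allI impI)
    fix T assume T: "finite T \<and> T \<subseteq> Q"
    show "(\<Sum>t\<in>T. \<bar>b i t\<bar>) \<le> k i"
    proof (cases "finite (P i)")
      case True
      let ?m = "mi i" and ?Sm = "S (mi i) (ti i)"
      have "(\<Sum>t\<in>T. \<bar>b i t\<bar>) = (\<Sum>t\<in>T \<inter> ?Sm. \<bar>b i t\<bar>)"
        using T by (intro sum.mono_neutral_right) (auto simp: b_def True)
      also have "\<dots> = lam i * (\<Sum>t\<in>T \<inter> ?Sm. \<bar>Fp i t\<bar>)"
        using k_nonneg iI by (simp add: b_def True sum_distrib_left abs_mult lam_def)
      also have "\<dots> \<le> lam i * sm i ?m"
        unfolding sm_def using k_nonneg iI S_fin
        by (intro mult_left_mono sum_mono2) (auto simp: lam_def)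
      also have "\<dots> \<le> lam i * (k i + 1 / real (Suc ?m))"
        using mi[OF iI True] k_nonneg iI
        by (intro mult_left_mono) (auto simp: lam_def P_def)
      also have "\<dots> = k i"
      proof -
        have "k i + 1 / real (Suc ?m) > 0" using k_nonneg iI
          by (intro add_nonneg_pos) auto
        then show ?thesis unfolding lam_def by (intro div_mul_self) simp
      qed
      finally show ?thesis .
    next
      case False
      define T' where "T' = {t\<in>T. Fp i t \<noteq> 0}"
      have T'fin: "finite T'" using T by (simp add: T'_def)
      obtain M where M: "to_nat_on (cls (ti i)) ` T' \<subseteq> {..<M}"
        using finite_nat_bounded[OF finite_imageI[OF T'fin]] by blast
      have T'S: "T' \<subseteq> S m (ti i)" if "M \<le> m" for m
      proof
        fix t assume t: "t \<in> T'"
        then have "Fp i t \<noteq> 0" by (simp add: T'_def)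
        from ti[OF this] have "cls (ti i) = cls t" by simp
        then show "t \<in> S m (ti i)" using M t that cls_self[of t] by (auto simp: S_def)
      qed
      show ?thesis
      proof (rule field_le_epsilon)
        fix e :: real assume e: "0 < e"
        obtain n :: nat where "inverse (real (Suc n)) < e" using reals_Archimedean[OF e] by blast
        then have n: "1 / real (Suc n) < e" by (simp add: inverse_eq_divide)
        have unb: "\<forall>m. \<exists>n\<ge>m. n \<in> P i"
          using False by (simp add: infinite_nat_iff_unbounded_le)
        obtain m where m: "m \<in> P i" "max M n \<le> m"
          using unb by blast
        have "(\<Sum>t\<in>T. \<bar>b i t\<bar>) = (\<Sum>t\<in>T. \<bar>Fp i t\<bar>)"
          by (simp add: b_def False)
        also have "\<dots> = (\<Sum>t\<in>T'. \<bar>Fp i t\<bar>)"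
          using T unfolding T'_def by (intro sum.mono_neutral_right) auto
        also have "\<dots> \<le> sm i m" unfolding sm_def
          using T'S[of m] m S_fin by (intro sum_mono2) auto
        also have "\<dots> \<le> k i + 1 / real (Suc m)" using m by (simp add: P_def)
        also have "\<dots> \<le> k i + 1 / real (Suc n)" using m by (simp add: frac_le)
        finally show "(\<Sum>t\<in>T. \<bar>b i t\<bar>) \<le> k i + e" using n by linarith
      qed
    qed
  qed
  have alim: "lim_zero I (\<lambda>i. a i t)" if tQ: "t \<in> Q" for t
    unfolding lim_zero_def
  proof (intro allI impI)
    fix e :: real assume e: "0 < e"
    have e2: "e / 2 > 0" using e by simp
    obtain n :: nat where "inverse (real (Suc n)) < e / 2" using reals_Archimedean[OF e2] by blast
    then have n: "1 / real (Suc n) < e / 2" by (simp add: inverse_eq_divide)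
    define M where "M = max n (Suc (to_nat_on (cls t) t))"
    have M1: "1 / real (Suc M) < e / 2"
      using n by (smt (verit, ccfv_SIG) M_def frac_le max.cobounded1 of_nat_0_less_iff of_nat_le_iff Suc_le_mono zero_less_Suc)
    define X where "X = {i\<in>I. (\<Sum>u\<in>S M t. \<bar>F i u\<bar>) \<ge> k i + 1 / real (Suc M)}"
    define Y where "Y = {i\<in>I. \<bar>F i t * indicator A (i, t)\<bar> \<ge> e / 2}"
    have Xfin: "finite X" using fin S_fin[of M t] S_Q[OF tQ, of M] unfolding X_def le_mod_c0_def
      by auto
    have Yfin: "finite Y" using Alim tQ e2 unfolding Y_def lim_zero_def by blast
    have "{i\<in>I. \<bar>a i t\<bar> \<ge> e} \<subseteq> X \<union> Y"
    proof (rule ccontr)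
      assume "\<not> ?thesis"
      then obtain i where i: "i \<in> I" "\<bar>a i t\<bar> \<ge> e" "i \<notin> X" "i \<notin> Y" by blast
      show False
      proof (cases "(i,t) \<in> A")
        case True
        then have "(i,t) \<notin> B" using AB by blast
        then have "a i t = F i t * indicator A (i,t)" using True b0 by (simp add: a_def Fp_def)
        then show False using i e by (simp add: Y_def)
      next
        case notA: False
        then have "(i,t) \<in> B" using AB i tQ by blast
        then have FpF: "Fp i t = F i t" using i tQ by (simp add: Fp_def)
        show False
        proof (cases "F i t = 0")
          case True then show False using b0 FpF i e by (simp add: a_def)
        next
          case Fnz: False
          then have clsq: "cls (ti i) = cls t" using ti FpF by auto
          have SS: "S m (ti i) = S m t" for m by (simp add: S_def clsq)
          have "sm i M \<le> (\<Sum>u\<in>S M t. \<bar>F i u\<bar>)" unfolding sm_def SS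
            by (intro sum_mono) (auto simp: Fp_def)
          also have "\<dots> < k i + 1 / real (Suc M)" using i by (auto simp: X_def)
          finally have MP: "M \<in> P i" by (simp add: P_def)
          show False
          proof (cases "finite (P i)")
            case False then show False using FpF i e by (simp add: a_def b_def)
          next
            case True
            note mi' = mi[OF i(1) True]
            have Mle: "M \<le> mi i" using mi' MP by blast
            have tS: "t \<in> S (mi i) (ti i)" using Mle cls_self[of t]
              by (auto simp: S_def M_def clsq)
            have ai: "a i t = (1 - lam i) * F i t" using tS True FpF
              by (simp add: a_def b_def algebra_simps)
            define d where "d = 1 / real (Suc (mi i))"
            have d0: "d > 0" by (simp add: d_def)
            have kd: "k i + d > 0" using k_nonneg i d0 by (smt (verit))
            have lam1: "1 - lam i = d / (k i + d)" using kd
              by (simp add: lam_def d_def field_simps)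
            have "\<bar>F i t\<bar> \<le> sm i (mi i)" unfolding sm_def
              using tS S_fin FpF by (metis abs_ge_zero member_le_sum)
            also have "\<dots> \<le> k i + d" using mi' by (simp add: P_def d_def)
            finally have Fb: "\<bar>F i t\<bar> \<le> k i + d" .
            have "\<bar>a i t\<bar> = d / (k i + d) * \<bar>F i t\<bar>" using ai lam1 d0 kd
              by (simp add: abs_mult)
            also have "\<dots> \<le> d / (k i + d) * (k i + d)"
              using Fb d0 kd by (intro mult_left_mono) auto
            also have "\<dots> = d" using kd by simp
            also have "\<dots> \<le> 1 / real (Suc M)" unfolding d_def using Mle by (simp add: frac_le)
            finally show False using i M1 e by linarith
          qed
        qed
      qed
    qed
    then show "finite {i\<in>I. e \<le> \<bar>a i t\<bar>}" using Xfin Yfin finite_subset by blast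
  qed
  obtain K where K: "\<forall>i\<in>I. k i \<le> K" using k_bdd by blast
  have "\<forall>i\<in>I. abs_sum_le Q (b i) K"
    using bsum K unfolding abs_sum_le_def by (meson order_trans)
  moreover have "\<forall>i\<in>I. \<forall>t\<in>Q. F i t = a i t + b i t" by (simp add: a_def)
  ultimately show ?thesis unfolding type_c0l1_bounded_def using alim bsum by blast
qed

theorem proposition2p22:
  fixes I :: "'i set" and Q :: "'t set" and F :: "'i \<Rightarrow> 't \<Rightarrow> real" and k :: "'i \<Rightarrow> real"
  assumes k_nonneg: "\<forall>i\<in>I. 0 \<le> k i"
    and k_bdd: "\<exists>K. \<forall>i\<in>I. k i \<le> K"
    and fin: "\<forall>S. finite S \<and> S \<subseteq> Q \<longrightarrow> le_mod_c0 I (\<lambda>i. \<Sum>t\<in>S. \<bar>F i t\<bar>) k"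
    and cnt: "\<forall>t\<in>Q. countable {i\<in>I. F i t \<noteq> 0}"
  shows "(type_c0l1 I Q F \<longleftrightarrow>
           (\<exists>A B. A \<inter> B = {} \<and> A \<union> B = I \<times> Q
              \<and> (\<forall>t\<in>Q. lim_zero I (\<lambda>i. F i t * indicator A (i, t)))
              \<and> (\<forall>i\<in>I. countable {t\<in>Q. (i, t) \<in> B})))
       \<and> ((\<exists>A B. A \<inter> B = {} \<and> A \<union> B = I \<times> Q
              \<and> (\<forall>t\<in>Q. lim_zero I (\<lambda>i. F i t * indicator A (i, t)))
              \<and> (\<forall>i\<in>I. countable {t\<in>Q. (i, t) \<in> B}))
           \<longleftrightarrow> type_c0l1_bounded I Q F k)"
proof (intro conjI iffI)
  assume "type_c0l1 I Q F"
  then show "\<exists>A B. A \<inter> B = {} \<and> A \<union> B = I \<times> Q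
              \<and> (\<forall>t\<in>Q. lim_zero I (\<lambda>i. F i t * indicator A (i, t)))
              \<and> (\<forall>i\<in>I. countable {t\<in>Q. (i, t) \<in> B})" by (rule a_to_b)
next
  assume "\<exists>A B. A \<inter> B = {} \<and> A \<union> B = I \<times> Q
              \<and> (\<forall>t\<in>Q. lim_zero I (\<lambda>i. F i t * indicator A (i, t)))
              \<and> (\<forall>i\<in>I. countable {t\<in>Q. (i, t) \<in> B})"
  then obtain A B where AB: "A \<inter> B = {}" "A \<union> B = I \<times> Q"
    "\<forall>t\<in>Q. lim_zero I (\<lambda>i. F i t * indicator A (i, t))"
    "\<forall>i\<in>I. countable {t\<in>Q. (i, t) \<in> B}" by blast
  have c: "type_c0l1_bounded I Q F k"
    by (rule b_to_c[OF k_nonneg k_bdd fin cnt AB])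
  then show "type_c0l1_bounded I Q F k" .
  from c show "type_c0l1 I Q F" by (rule c_to_a)
next
  assume "type_c0l1_bounded I Q F k"
  then have "type_c0l1 I Q F" by (rule c_to_a)
  then show "\<exists>A B. A \<inter> B = {} \<and> A \<union> B = I \<times> Q
              \<and> (\<forall>t\<in>Q. lim_zero I (\<lambda>i. F i t * indicator A (i, t)))
              \<and> (\<forall>i\<in>I. countable {t\<in>Q. (i, t) \<in> B})" by (rule a_to_b)
qed

end
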